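(* Let $n\ge2$ and let $g:\mathbb{R}\to(0,\infty)$ be a continuous, even, $2\pi/n$-periodic function that is nondecreasing on $[0,\pi/n]$, and let $D=\{re^{i\theta}:\theta\in[0,2\pi),\ 0\le r<g(\theta)\}$. For $\alpha\in\mathbb{R}$ let $S_\alpha$ denote the reflection across the line $\{re^{i\alpha}:r\in\mathbb{R}\}$, i.e. $S_\alpha(re^{i\theta})=re^{i(2\alpha-\theta)}$, and for $\alpha<\beta$ let $\sigma(\alpha,\beta)=\{re^{i\theta}: r>0,\ \alpha<\theta<\beta\}$. Then for every $t\in(0,\pi/n)$, $$S_{\frac{\pi}{n}+t}\Big(D\cap\sigma\big(\tfrac{\pi}{n}+t,\tfrac{2\pi}{n}+t\big)\Big)\subseteq D\cap\sigma\big(t,\tfrac{\pi}{n}+t\big).$$ Moreover, if $D$ is not a disk, then $$S_{\frac{\pi}{n}+t}\Big(\partial D\cap\sigma\big(\tfrac{\pi}{n}+t,\tfrac{2\pi}{n}+t\big)\Big)\cap D\neq\emptyset.$$ *)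

theory Defs
  imports "HOL-Analysis.Analysis"
begin

definition polar_domain :: "(real \<Rightarrow> real) \<Rightarrow> complex set" where
  "polar_domain g = {complex_of_real r * cis \<theta> | r \<theta>. 0 \<le> \<theta> \<and> \<theta> < 2 * pi \<and> 0 \<le> r \<and> r < g \<theta>}"

text \<open>Reflection across the line { r e^(i alpha) : r real }:
  S_alpha (r e^(i theta)) = r e^(i (2 alpha - theta)), i.e. z maps to e^(2 i alpha) * conj z.\<close>
definition refl_line :: "real \<Rightarrow> complex \<Rightarrow> complex" where
  "refl_line \<alpha> z = cis (2 * \<alpha>) * cnj z"

definition sector :: "real \<Rightarrow> real \<Rightarrow> complex set" where
  "sector \<alpha> \<beta> = {complex_of_real r * cis \<theta> | r \<theta>. 0 < r \<and> \<alpha> < \<theta> \<and> \<theta> < \<beta>}"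

end

theory Submission
  imports Defs
begin


lemma cis_per: "cis (x + 2*pi * of_int k) = cis x"
proof -
  have "cis (x + 2*pi * of_int k) = cis x * cis (2*pi * of_int k)" by (simp only: cis_mult)
  also have "cis (2*pi * of_int k) = 1" using cis_multiple_2pi[of "of_int k"] by simp
  finally show ?thesis by simp
qed

lemma cis_eqD: assumes "cis a = cis b" shows "\<exists>k::int. a = b + 2*pi * of_int k"
proof -
  have "exp (\<i> * complex_of_real a) = exp (\<i> * complex_of_real b)" using assms by (simp add: cis_conv_exp)
  then obtain k::int where "\<i> * complex_of_real a = \<i> * complex_of_real b + (of_int (2*k) * pi) * \<i>"
    using exp_eq by blast
  then have "Im (\<i> * complex_of_real a) = Im (\<i> * complex_of_real b + (of_int (2*k) * pi) * \<i>)" by simp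
  then have "a = b + 2*pi * of_int k" by simp
  then show ?thesis by blast
qed

lemma per_int:
  assumes L: "(L::real) > 0" and per: "\<And>x. g (x + L) = g x"
  shows "g (x + of_int k * L) = (g x :: real)"
proof -
  have nat: "g (y + real m * L) = g y" for y m
  proof (induction m)
    case (Suc m)
    have "y + real (Suc m) * L = (y + real m * L) + L" by (simp add: algebra_simps)
    then show ?case using per[of "y + real m * L"] Suc by (simp add: add.assoc)
  qed simp
  show ?thesis
  proof (cases "k \<ge> 0")
    case True then show ?thesis using nat[of x "nat k"] by simp
  next
    case False
    then have "x = (x + of_int k * L) + real (nat (-k)) * L" by (simp add: algebra_simps)
    then show ?thesis using nat[of "x + of_int k * L" "nat (-k)"] by (metis add.assoc)
  qed
qed

lemma pd_iff:
  assumes pos: "\<And>x. g x > 0" and per: "\<And>x k. g (x + 2*pi * of_int k) = g x"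
    and r: "r \<ge> 0"
  shows "complex_of_real r * cis \<theta> \<in> polar_domain g \<longleftrightarrow> r < g \<theta>"
proof
  assume "complex_of_real r * cis \<theta> \<in> polar_domain g"
  then obtain r' \<theta>' where e: "complex_of_real r * cis \<theta> = complex_of_real r' * cis \<theta>'"
    and r': "0 \<le> r'" "r' < g \<theta>'" unfolding polar_domain_def by blast
  have "cmod (complex_of_real r * cis \<theta>) = cmod (complex_of_real r' * cis \<theta>')" using e by simp
  then have rr: "r = r'" using r r' by (simp add: norm_mult)
  show "r < g \<theta>"
  proof (cases "r = 0")
    case True then show ?thesis using pos by simp
  next
    case False
    then have "cis \<theta> = cis \<theta>'" using e rr by simp
    then obtain k where "\<theta> = \<theta>' + 2*pi * of_int k" using cis_eqD by blast
    then have "g \<theta> = g \<theta>'" using per by simp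
    then show ?thesis using rr r' by simp
  qed
next
  assume lt: "r < g \<theta>"
  define k where "k = \<lfloor>\<theta> / (2*pi)\<rfloor>"
  define \<theta>' where "\<theta>' = \<theta> + 2*pi * of_int (-k)"
  have "of_int k \<le> \<theta> / (2*pi)" "\<theta> / (2*pi) < of_int k + 1" unfolding k_def by linarith+
  then have "2*pi * of_int k \<le> \<theta>" "\<theta> < 2*pi * of_int k + 2*pi"
    using pi_gt_zero by (simp_all add: field_simps)
  then have b: "0 \<le> \<theta>'" "\<theta>' < 2*pi" unfolding \<theta>'_def by simp_all
  have "cis \<theta>' = cis \<theta>" unfolding \<theta>'_def by (rule cis_per)
  moreover have "g \<theta>' = g \<theta>" unfolding \<theta>'_def by (rule per)
  ultimately show "complex_of_real r * cis \<theta> \<in> polar_domain g"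
    unfolding polar_domain_def using b r lt by (metis (mono_tags, lifting) mem_Collect_eq)
qed

lemma refl_polar: "refl_line \<alpha> (complex_of_real r * cis \<theta>) = complex_of_real r * cis (2*\<alpha> - \<theta>)"
  unfolding refl_line_def by (simp add: cis_cnj mult.left_commute cis_mult)

lemma chain:
  fixes h :: "real \<Rightarrow> real"
  assumes mono: "mono_on {0..a} h" and lt: "h 0 < h a" and c: "0 < c" "c \<le> a"
  shows "\<exists>x\<in>{0..a-c}. h x < h (x + c)"
proof (rule ccontr)
  assume "\<not> ?thesis"
  then have nc: "\<And>x. 0 \<le> x \<Longrightarrow> x \<le> a - c \<Longrightarrow> h (x + c) \<le> h x" by force
  have ind: "\<forall>x. 0 \<le> x \<and> x \<le> a \<and> x \<le> real (Suc m) * c \<longrightarrow> h x = h 0" for m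
  proof (induction m)
    case 0
    show ?case
    proof (intro allI impI)
      fix x assume x: "0 \<le> x \<and> x \<le> a \<and> x \<le> real (Suc 0) * c"
      have "h 0 \<le> h x" using x by (intro mono_onD[OF mono]) auto
      moreover have "h x \<le> h c" using x c by (intro mono_onD[OF mono]) auto
      moreover have "h (0 + c) \<le> h 0" using c by (intro nc) auto
      ultimately show "h x = h 0" by simp
    qed
  next
    case (Suc m)
    show ?case
    proof (intro allI impI)
      fix x assume x: "0 \<le> x \<and> x \<le> a \<and> x \<le> real (Suc (Suc m)) * c"
      show "h x = h 0"
      proof (cases "x \<le> real (Suc m) * c")
        case True then show ?thesis using Suc.IH[rule_format, of x] x by simp
      next
        case False
        then have "x > real (Suc m) * c" by simp
        moreover have "real (Suc m) * c \<ge> c" using c by simp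
        ultimately have x0: "0 \<le> x - c" by linarith
        have "real (Suc (Suc m)) * c = real (Suc m) * c + c" by (simp add: algebra_simps)
        then have "x - c \<le> real (Suc m) * c" using x by linarith
        then have x1: "0 \<le> x - c" "x - c \<le> a - c" "x - c \<le> real (Suc m) * c"
          using x x0 by auto
        have "x - c \<le> a" using x c by linarith
        then have e: "h (x - c) = h 0" using Suc.IH[rule_format, of "x - c"] x1 by simp
        have "h (x - c + c) \<le> h (x - c)" using x1 by (intro nc) auto
        moreover have "h 0 \<le> h x" using x by (intro mono_onD[OF mono]) auto
        ultimately show ?thesis using e by simp
      qed
    qed
  qed
  obtain m where "a < real m * c" using ex_less_of_nat_mult[OF c(1), of a] by blast
  then have "a \<le> real (Suc m) * c" using c by (simp add: algebra_simps)
  then have "h a = h 0" using ind[of m, rule_format, of a] c by simp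
  then show False using lt by simp
qed

theorem lemma2:
  fixes n :: nat and g :: "real \<Rightarrow> real" and t :: real
  assumes "n \<ge> 2"
    and "\<And>x. g x > 0"
    and "continuous_on UNIV g"
    and "\<And>x. g (- x) = g x"
    and "\<And>x. g (x + 2 * pi / real n) = g x"
    and "mono_on {0 .. pi / real n} g"
    and "0 < t" and "t < pi / real n"
  shows "(refl_line (pi / real n + t) ` (polar_domain g \<inter> sector (pi / real n + t) (2 * pi / real n + t))
           \<subseteq> polar_domain g \<inter> sector t (pi / real n + t)) \<and>
         (\<not> (\<exists>c \<rho>. polar_domain g = ball c \<rho>) \<longrightarrow>
           refl_line (pi / real n + t) ` (frontier (polar_domain g) \<inter> sector (pi / real n + t) (2 * pi / real n + t))
             \<inter> polar_domain g \<noteq> {})"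
proof -
  note n2 = assms(1) and pos = assms(2) and even = assms(4) and perL = assms(5) and mono = assms(6)
  define a where "a = pi / real n"
  have L: "2 * pi / real n = 2 * a" unfolding a_def by simp
  have a0: "a > 0" unfolding a_def using n2 by simp
  have ta: "0 < t" "t < a" using assms(7,8) unfolding a_def by auto
  have perL': "\<And>x. g (x + 2 * a) = g x" using perL L by metis
  have shiftk: "g (x + of_int k * (2*a)) = g x" for x k
    by (rule per_int) (use a0 perL' in auto)
  have per: "g (x + 2*pi * of_int k) = g x" for x k
  proof -
    have eq: "2*pi * of_int k = of_int (int n * k) * (2*a)" unfolding a_def using n2 by simp
    show ?thesis unfolding eq by (rule shiftk)
  qed
  have shift: "g (x - 2*a) = g x" for x using shiftk[of x "-1"] by simp
  have monoD: "\<And>x y. 0 \<le> x \<Longrightarrow> x \<le> y \<Longrightarrow> y \<le> a \<Longrightarrow> g x \<le> g y"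
    using mono unfolding a_def by (intro mono_onD[OF mono]) auto
  have pdi: "\<And>r \<theta>. r \<ge> 0 \<Longrightarrow> complex_of_real r * cis \<theta> \<in> polar_domain g \<longleftrightarrow> r < g \<theta>"
    by (rule pd_iff) (use pos per in auto)
  have key: "g (a + t + \<phi>) \<le> g (a + t - \<phi>)" if \<phi>: "0 < \<phi>" "\<phi> < a" for \<phi>
  proof -
    have "g (a + t + \<phi>) = g (t + \<phi> - a)" using shift[of "a + t + \<phi>"] by simp
    also have "\<dots> = g \<bar>t + \<phi> - a\<bar>" using even[of "t + \<phi> - a"] by (simp add: abs_if)
    finally have e1: "g (a + t + \<phi>) = g \<bar>t + \<phi> - a\<bar>" .
    have e2: "g (a + t - \<phi>) = g (a - \<bar>t - \<phi>\<bar>)"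
    proof (cases "\<phi> \<le> t")
      case True
      have "g (a + t - \<phi>) = g (t - \<phi> - a)" using shift[of "a + t - \<phi>"] by simp
      also have "\<dots> = g (a - t + \<phi>)" using even[of "a - t + \<phi>"] by (simp add: algebra_simps)
      also have "a - t + \<phi> = a - \<bar>t - \<phi>\<bar>" using True by simp
      finally show ?thesis .
    next
      case False
      then have "a + t - \<phi> = a - \<bar>t - \<phi>\<bar>" by simp
      then show ?thesis by (rule arg_cong)
    qed
    show ?thesis unfolding e1 e2 using \<phi> ta by (intro monoD) auto
  qed
  have part1: "refl_line (a + t) ` (polar_domain g \<inter> sector (a + t) (2 * a + t))
           \<subseteq> polar_domain g \<inter> sector t (a + t)"
  proof
    fix w assume "w \<in> refl_line (a + t) ` (polar_domain g \<inter> sector (a + t) (2 * a + t))"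
    then obtain z where z: "z \<in> polar_domain g" "z \<in> sector (a + t) (2 * a + t)" and w: "w = refl_line (a + t) z"
      by blast
    from z(2) obtain r \<theta> where zr: "z = complex_of_real r * cis \<theta>" "0 < r" "a + t < \<theta>" "\<theta> < 2 * a + t"
      unfolding sector_def by blast
    have "r < g \<theta>" using z(1) zr pdi by simp
    moreover have "g \<theta> \<le> g (2 * (a + t) - \<theta>)"
      using key[of "\<theta> - a - t"] zr by (simp add: algebra_simps)
    ultimately have "r < g (2 * (a + t) - \<theta>)" by simp
    then have "w \<in> polar_domain g" using w zr pdi refl_polar by simp
    moreover have "w \<in> sector t (a + t)" unfolding sector_def w zr refl_polar
      by (rule CollectI, rule exI[of _ r], rule exI[of _ "2 * (a + t) - \<theta>"]) (use zr in auto)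
    ultimately show "w \<in> polar_domain g \<inter> sector t (a + t)" by blast
  qed
  have part2: "refl_line (a + t) ` (frontier (polar_domain g) \<inter> sector (a + t) (2 * a + t))
             \<inter> polar_domain g \<noteq> {}" if nd: "\<not> (\<exists>c \<rho>. polar_domain g = ball c \<rho>)"
  proof -
    have reduce: "\<exists>y. 0 \<le> y \<and> y \<le> a \<and> g x = g y" for x
    proof -
      define k where "k = \<lfloor>x / (2*a)\<rfloor>"
      define y where "y = x + of_int (-k) * (2*a)"
      have "of_int k \<le> x / (2*a)" "x / (2*a) < of_int k + 1" unfolding k_def by linarith+
      then have "of_int k * (2*a) \<le> x" "x < of_int k * (2*a) + 2*a"
        using a0 by (simp_all add: field_simps)
      then have y: "0 \<le> y" "y < 2*a" unfolding y_def by (simp_all add: algebra_simps)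
      have gy: "g x = g y" unfolding y_def by (rule shiftk[symmetric])
      show ?thesis
      proof (cases "y \<le> a")
        case True then show ?thesis using y gy by blast
      next
        case False
        have "g y = g (y - 2*a)" using shift[of y] by simp
        also have "\<dots> = g (2*a - y)" using even[of "2*a - y"] by simp
        finally show ?thesis using False y gy by (intro exI[of _ "2*a - y"]) auto
      qed
    qed
    have g0a: "g 0 < g a"
    proof (rule ccontr)
      assume "\<not> g 0 < g a"
      moreover have "g 0 \<le> g a" using a0 by (intro monoD) auto
      ultimately have eq: "g a = g 0" by simp
      have const: "g x = g 0" for x
      proof -
        obtain y where y: "0 \<le> y" "y \<le> a" "g x = g y" using reduce by blast
        have "g 0 \<le> g y" "g y \<le> g a" using y by (auto intro: monoD)
        then show ?thesis using y eq by simp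
      qed
      have "polar_domain g = ball 0 (g 0)"
      proof (rule set_eqI)
        fix z :: complex
        have z: "z = complex_of_real (cmod z) * cis (Arg z)" using rcis_cmod_Arg[of z] by (simp add: rcis_def)
        have "z \<in> polar_domain g \<longleftrightarrow> cmod z < g (Arg z)" using pdi[of "cmod z" "Arg z"] z by simp
        then show "z \<in> polar_domain g \<longleftrightarrow> z \<in> ball 0 (g 0)" using const[of "Arg z"] by simp
      qed
      then show False using nd by blast
    qed
    have monoa: "mono_on {0..a} g" using mono unfolding a_def .
    obtain \<theta> where th: "a + t < \<theta>" "\<theta> < 2 * a + t" "g \<theta> < g (2 * (a + t) - \<theta>)"
    proof (cases "2 * t \<le> a")
      case True
      obtain x where x: "0 \<le> x" "x \<le> a - 2*t" "g x < g (x + 2*t)"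
        using chain[OF monoa g0a, of "2*t"] ta True by auto
      have "g (2*a - x) = g (- x)" using shift[of "2*a - x"] by simp
      then have "g (2*a - x) = g x" using even by simp
      moreover have "2 * (a + t) - (2*a - x) = x + 2*t" by simp
      ultimately show ?thesis using that[of "2*a - x"] x ta by (simp add: add.commute)
    next
      case False
      obtain x where x: "0 \<le> x" "x \<le> a - (2*a - 2*t)" "g x < g (x + (2*a - 2*t))"
        using chain[OF monoa g0a, of "2*a - 2*t"] ta False by auto
      have "g (2*a + x) = g x" using shift[of "2*a + x"] by simp
      moreover have "g (2 * (a + t) - (2*a + x)) = g (x + (2*a - 2*t))"
      proof -
        have "g (2 * (a + t) - (2*a + x)) = g (2 * (a + t) - (2*a + x) - 2*a)" using shift by simp
        also have "2 * (a + t) - (2*a + x) - 2*a = - (x + (2*a - 2*t))" by simp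
        also have "g (- (x + (2*a - 2*t))) = g (x + (2*a - 2*t))" by (rule even)
        finally show ?thesis .
      qed
      ultimately show ?thesis using that[of "2*a + x"] x ta by (simp add: algebra_simps)
    qed
    define w where "w = complex_of_real (g \<theta>) * cis \<theta>"
    have gpos: "g \<theta> > 0" using pos by simp
    have wnot: "w \<notin> polar_domain g" unfolding w_def using pdi[of "g \<theta>" \<theta>] gpos by simp
    have wcl: "w \<in> closure (polar_domain g)"
    proof (rule closure_approachable[THEN iffD2], intro allI impI)
      fix e :: real assume e: "e > 0"
      define d where "d = min (g \<theta> / 2) (e / 2)"
      have d: "0 < d" "d < g \<theta>" "d < e" unfolding d_def using e gpos by auto
      define y where "y = complex_of_real (g \<theta> - d) * cis \<theta>"
      have "y \<in> polar_domain g" unfolding y_def using pdi[of "g \<theta> - d" \<theta>] d by simp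
      moreover have "dist y w = d"
      proof -
        have "y - w = complex_of_real (- d) * cis \<theta>" unfolding y_def w_def by (simp add: algebra_simps)
        then show ?thesis using d by (simp add: dist_norm norm_mult)
      qed
      ultimately show "\<exists>y\<in>polar_domain g. dist y w < e" using d by auto
    qed
    have wfr: "w \<in> frontier (polar_domain g)"
      unfolding frontier_def using wcl wnot interior_subset by blast
    have wsec: "w \<in> sector (a + t) (2 * a + t)" unfolding sector_def w_def using gpos th by blast
    have "refl_line (a + t) w \<in> polar_domain g"
      unfolding w_def refl_polar using pdi[of "g \<theta>"] gpos th by simp
    then show ?thesis using wfr wsec by blast
  qed
  show ?thesis using part1 part2 unfolding a_def by simp
qed

end
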